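(* For every $p\ge1$ there exists $C_p>0$, independent of $t$, such that for all $t\in[0,T]$ and $\mathbf{x}=(a,\epsilon,q),\mathbf{x}'=(a',\epsilon',q')\in\mathcal{O}$, $$\mathbb{E}_t\Big[\sup_{r\in[t,T]}\big|S_r^{t,\mathbf{x}}-S_r^{t,\mathbf{x}'}\big|^p\Big]\le C_pe^{p|\epsilon'|}\Big(|a-a'|^p+a^p\big|e^{\epsilon-\epsilon'}-1\big|^p\Big).$$
   Context: $T>0$; $W^1,W^2$ are independent standard Brownian motions; $\mu_1,\sigma_1,k,\sigma_2>0$, $\rho\in[-1,1]$, $0<\bar Q_0<\infty$, $\mathcal{O}=(0,\infty)\times\mathbb{R}\times[0,\bar Q_0)$. For $\mathbf{x}=(a,\epsilon,q)$, $(A^{t,\mathbf{x}}_r,\varepsilon^{t,\mathbf{x}}_r)_{r\in[t,T]}$ solve $dA_r=\mu_1A_rdr+\sigma_1A_rdW^1_r$, $d\varepsilon_r=-k\varepsilon_rdr+\sigma_2(\rho dW^1_r+\sqrt{1-\rho^2}dW^2_r)$, $(A_t,\varepsilon_t)=(a,\epsilon)$, both driven by the same Brownian motions for $\mathbf{x}$ and $\mathbf{x}'$; $S^{t,\mathbf{x}}_r=A^{t,\mathbf{x}}_re^{\varepsilon^{t,\mathbf{x}}_r}$; $\mathbb{E}_t$ is expectation given the initial conditions at time $t$. *)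

theory Defs
  imports "HOL-Probability.Probability"
begin

definition std_BM :: "'a measure \<Rightarrow> real \<Rightarrow> (real \<Rightarrow> 'a \<Rightarrow> real) \<Rightarrow> bool" where
  "std_BM M T W \<longleftrightarrow>
     prob_space M \<and>
     (\<forall>t\<in>{0..T}. W t \<in> borel_measurable M) \<and>
     (\<forall>\<omega>\<in>space M. W 0 \<omega> = 0 \<and> continuous_on {0..T} (\<lambda>t. W t \<omega>)) \<and>
     (\<forall>s t. 0 \<le> s \<and> s < t \<and> t \<le> T \<longrightarrow>
        distributed M lborel (\<lambda>\<omega>. W t \<omega> - W s \<omega>) (normal_density 0 (sqrt (t - s)))) \<and>
     (\<forall>(n::nat) (u::nat \<Rightarrow> real). u 0 \<ge> 0 \<and> u n \<le> T \<and> (\<forall>i<n. u i < u (Suc i)) \<longrightarrow>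
        prob_space.indep_vars M (\<lambda>_. borel) (\<lambda>i \<omega>. W (u (Suc i)) \<omega> - W (u i) \<omega>) {..<n})"

definition proc_sigma :: "'a measure \<Rightarrow> real \<Rightarrow> (real \<Rightarrow> 'a \<Rightarrow> real) \<Rightarrow> 'a set set" where
  "proc_sigma M T W = sigma_sets (space M)
     (\<Union>t\<in>{0..T}. {W t -` A \<inter> space M | A. A \<in> sets borel})"

definition indep_BMs :: "'a measure \<Rightarrow> real \<Rightarrow> (real \<Rightarrow> 'a \<Rightarrow> real) \<Rightarrow> (real \<Rightarrow> 'a \<Rightarrow> real) \<Rightarrow> bool" where
  "indep_BMs M T W1 W2 \<longleftrightarrow> std_BM M T W1 \<and> std_BM M T W2 \<and>
     prob_space.indep_set M (proc_sigma M T W1) (proc_sigma M T W2)"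

text \<open>Unique strong solution of dA = mu1 A dr + sig1 A dW1, A_t = a (geometric BM).\<close>
definition A_proc :: "real \<Rightarrow> real \<Rightarrow> (real \<Rightarrow> 'a \<Rightarrow> real) \<Rightarrow> real \<Rightarrow> real \<Rightarrow> real \<Rightarrow> 'a \<Rightarrow> real" where
  "A_proc mu1 sig1 W1 t a r \<omega> =
     a * exp ((mu1 - sig1^2 / 2) * (r - t) + sig1 * (W1 r \<omega> - W1 t \<omega>))"

text \<open>Unique strong solution of the OU equation d eps = -k eps dr + sig2 dB, eps_t = e, with
  B = rho W1 + sqrt(1-rho^2) W2, written pathwise: the Wiener integral
  int_t^r exp(-k(r-s)) dB_s equals (B_r - B_t) - k int_t^r exp(-k(r-s)) (B_s - B_t) ds.\<close>
definition eps_proc :: "real \<Rightarrow> real \<Rightarrow> real \<Rightarrow> (real \<Rightarrow> 'a \<Rightarrow> real) \<Rightarrow> (real \<Rightarrow> 'a \<Rightarrow> real)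
     \<Rightarrow> real \<Rightarrow> real \<Rightarrow> real \<Rightarrow> 'a \<Rightarrow> real" where
  "eps_proc k sig2 rho W1 W2 t e r \<omega> =
     (let B = (\<lambda>s. rho * W1 s \<omega> + sqrt (1 - rho^2) * W2 s \<omega>) in
      e * exp (- k * (r - t)) +
      sig2 * ((B r - B t) - k * integral {t..r} (\<lambda>s. exp (- k * (r - s)) * (B s - B t))))"

definition S_proc :: "real \<Rightarrow> real \<Rightarrow> real \<Rightarrow> real \<Rightarrow> real \<Rightarrow> (real \<Rightarrow> 'a \<Rightarrow> real) \<Rightarrow> (real \<Rightarrow> 'a \<Rightarrow> real)
     \<Rightarrow> real \<Rightarrow> real \<Rightarrow> real \<Rightarrow> real \<Rightarrow> 'a \<Rightarrow> real" where
  "S_proc mu1 sig1 k sig2 rho W1 W2 t a e r \<omega> =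
     A_proc mu1 sig1 W1 t a r \<omega> * exp (eps_proc k sig2 rho W1 W2 t e r \<omega>)"

definition domO :: "real \<Rightarrow> (real \<times> real \<times> real) set" where
  "domO Q0 = {(a, e, q). 0 < a \<and> 0 \<le> q \<and> q < Q0}"

end

theory Submission
  imports Defs
begin


lemma normal_mgf_density:
  fixes s c x :: real assumes "s > 0"
  shows "normal_density 0 s x * exp (c * x) = exp (c^2 * s^2 / 2) * normal_density (c * s^2) s x"
  unfolding normal_density_def
proof -
  have "- (x - 0)\<^sup>2 / (2 * s\<^sup>2) + c * x = c^2 * s^2 / 2 + (- (x - c * s\<^sup>2)\<^sup>2 / (2 * s\<^sup>2))"
    using assms by (simp add: field_simps power2_eq_square)
  then have "exp (- (x - 0)\<^sup>2 / (2 * s\<^sup>2)) * exp (c * x) = exp (c^2 * s^2 / 2) * exp (- (x - c * s\<^sup>2)\<^sup>2 / (2 * s\<^sup>2))"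
    by (metis exp_add)
  then show "1 / sqrt (2 * pi * s\<^sup>2) * exp (- (x - 0)\<^sup>2 / (2 * s\<^sup>2)) * exp (c * x) =
    exp (c\<^sup>2 * s\<^sup>2 / 2) * (1 / sqrt (2 * pi * s\<^sup>2) * exp (- (x - c * s\<^sup>2)\<^sup>2 / (2 * s\<^sup>2)))"
    by (simp add: mult_ac)
qed

lemma nn_normal_density: "s > 0 \<Longrightarrow> (\<integral>\<^sup>+x. ennreal (normal_density m s x) \<partial>lborel) = 1"
  by (subst nn_integral_eq_integral) auto

lemma normal_mgf:
  fixes X :: "'a \<Rightarrow> real"
  assumes "distributed M lborel X (normal_density 0 s)" "s > 0"
  shows "(\<integral>\<^sup>+\<omega>. ennreal (exp (c * X \<omega>)) \<partial>M) = ennreal (exp (c^2 * s^2 / 2))"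
proof -
  have "(\<integral>\<^sup>+\<omega>. ennreal (exp (c * X \<omega>)) \<partial>M) = (\<integral>\<^sup>+x. ennreal (normal_density 0 s x) * ennreal (exp (c * x)) \<partial>lborel)"
    by (rule distributed_nn_integral[OF assms(1), symmetric]) measurable
  also have "\<dots> = (\<integral>\<^sup>+x. ennreal (exp (c^2 * s^2 / 2)) * ennreal (normal_density (c * s^2) s x) \<partial>lborel)"
    by (intro nn_integral_cong) (simp add: ennreal_mult[symmetric] normal_mgf_density[OF assms(2)])
  also have "\<dots> = ennreal (exp (c^2 * s^2 / 2))"
    by (subst nn_integral_cmult) (auto simp: nn_normal_density assms)
  finally show ?thesis .
qed

lemma (in prob_space) indep_var_nn_integral_mult:
  fixes X Y :: "'a \<Rightarrow> ennreal"
  assumes "indep_var borel X borel Y"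
  shows "(\<integral>\<^sup>+\<omega>. X \<omega> * Y \<omega> \<partial>M) = (\<integral>\<^sup>+\<omega>. X \<omega> \<partial>M) * (\<integral>\<^sup>+\<omega>. Y \<omega> \<partial>M)"
proof -
  have cb: "case_bool borel borel = (\<lambda>_::bool. (borel :: ennreal measure))"
    by (simp add: fun_eq_iff split: bool.split)
  have "indep_vars (\<lambda>_. borel) (case_bool X Y) UNIV"
    using assms unfolding indep_var_def cb .
  from indep_vars_nn_integral[OF _ this] show ?thesis
    by (simp add: UNIV_bool mult.commute)
qed



lemma comp_meas_PiM: "(\<lambda>f. f i) \<in> borel_measurable (PiM K (\<lambda>_. (borel::real measure)))"
proof (cases "i \<in> K")
  case True then show ?thesis by (rule measurable_component_singleton)
next
  case False
  show ?thesis
    by (rule measurable_cong[where f="\<lambda>_. undefined", THEN iffD1])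
       (use False in \<open>auto simp: space_PiM PiE_def extensional_def\<close>)
qed

lemma strict_mono_upto:
  fixes u :: "nat \<Rightarrow> real"
  assumes "\<forall>i<N. u i < u (Suc i)" "i < j" "j \<le> N"
  shows "u i < u j"
  using assms(2,3)
proof (induction j)
  case 0 then show ?case by simp
next
  case (Suc j)
  show ?case
  proof (cases "i = j")
    case True then show ?thesis using assms(1) Suc by auto
  next
    case False then have "u i < u j" using Suc by auto
    also have "u j < u (Suc j)" using assms(1) Suc by auto
    finally show ?thesis .
  qed
qed

lemma mono_upto:
  fixes u :: "nat \<Rightarrow> real"
  assumes "\<forall>i<N. u i < u (Suc i)" "i \<le> j" "j \<le> N"
  shows "u i \<le> u j"
  using strict_mono_upto[OF assms(1), of i j] assms by (cases "i = j") auto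

lemma level_bound:
  fixes M :: "'w measure" and W :: "real \<Rightarrow> 'w \<Rightarrow> real" and u :: "nat \<Rightarrow> real"
  assumes BM: "std_BM M T W" and sg: "sg = 1 \<or> sg = -1" and lam: "0 \<le> lam"
    and u0: "0 \<le> u 0" and uN: "u N \<le> T" and inc: "\<forall>i<N. u i < u (Suc i)" and N: "0 < N"
  shows "emeasure M {\<omega>\<in>space M. x \<le> Max ((\<lambda>j. sg * (W (u j) \<omega> - W (u 0) \<omega>)) ` {..N})}
    \<le> ennreal (exp (- lam * x) * exp (lam^2 * (u N - u 0) / 2))"
proof -
  interpret prob_space M using BM unfolding std_BM_def by auto
  have sg2: "sg^2 = 1" using sg by auto
  have uin: "0 \<le> u j \<and> u j \<le> T" if "j \<le> N" for j
    using mono_upto[OF inc, of 0 j] mono_upto[OF inc, of j N] that u0 uN by auto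
  have Wm: "W (u j) \<in> borel_measurable M" if "j \<le> N" for j
    using BM uin[OF that] unfolding std_BM_def by auto
  define S where "S j \<omega> = sg * (W (u j) \<omega> - W (u 0) \<omega>)" for j \<omega>
  have Sm: "S j \<in> borel_measurable M" if "j \<le> N" for j
    unfolding S_def using Wm[OF that] Wm[of 0] by measurable
  define A where "A k = {\<omega>\<in>space M. x \<le> S k \<omega> \<and> (\<forall>j\<in>{..<k}. S j \<omega> < x)}" for k
  have Asets: "A k \<in> sets M" if "k \<le> N" for k
  proof -
    have "Measurable.pred M (\<lambda>\<omega>. x \<le> S k \<omega> \<and> (\<forall>j\<in>{..<k}. S j \<omega> < x))"
    proof (intro pred_intros_logic pred_intros_finite)
      show "Measurable.pred M (\<lambda>\<omega>. x \<le> S k \<omega>)" using Sm[OF that] by measurable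
      fix j assume "j \<in> {..<k}"
      then have "j \<le> N" using that by auto
      then show "Measurable.pred M (\<lambda>\<omega>. S j \<omega> < x)" using Sm[of j] by measurable
    qed auto
    then show ?thesis unfolding A_def by (simp add: pred_def)
  qed
  define C where "C = exp (lam^2 * (u N - u 0) / 2)"
  define Mx where "Mx \<omega> = Max ((\<lambda>j. S j \<omega>) ` {..N})" for \<omega>
  have Mxm: "Mx \<in> borel_measurable M"
    unfolding Mx_def by (rule borel_measurable_Max) (auto intro: Sm)
  have Bset: "{\<omega>\<in>space M. x \<le> Mx \<omega>} \<in> sets M" using Mxm by measurable
  have key: "(\<integral>\<^sup>+\<omega>. ennreal (exp (lam * S k \<omega>)) * indicator (A k) \<omega> \<partial>M)
      \<le> (\<integral>\<^sup>+\<omega>. ennreal (exp (lam * S N \<omega>)) * indicator (A k) \<omega> \<partial>M)" if k: "k \<le> N" for k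
  proof (cases "k = N")
    case True then show ?thesis by simp
  next
    case False
    then have kN: "k < N" using k by auto
    define v where "v i = (if i \<le> k then u i else u N)" for i
    define xi where "xi i \<omega> = W (v (Suc i)) \<omega> - W (v i) \<omega>" for i \<omega>
    have vinc: "\<forall>i<Suc k. v i < v (Suc i)"
    proof (intro allI impI)
      fix i assume "i < Suc k"
      then show "v i < v (Suc i)"
        using inc kN strict_mono_upto[OF inc, of k N] by (cases "i = k") (auto simp: v_def)
    qed
    have BMi: "\<forall>(n::nat) (u::nat \<Rightarrow> real). u 0 \<ge> 0 \<and> u n \<le> T \<and> (\<forall>i<n. u i < u (Suc i)) \<longrightarrow>
        prob_space.indep_vars M (\<lambda>_. borel) (\<lambda>i \<omega>. W (u (Suc i)) \<omega> - W (u i) \<omega>) {..<n}"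
      using BM unfolding std_BM_def by blast
    have "v 0 \<ge> 0 \<and> v (Suc k) \<le> T \<and> (\<forall>i<Suc k. v i < v (Suc i))"
      using vinc u0 uN by (auto simp: v_def)
    then have "prob_space.indep_vars M (\<lambda>_. borel) xi {..<Suc k}"
      using BMi unfolding xi_def by blast
    then have ind0: "indep_vars (\<lambda>_. borel) xi {..<Suc k}" .
    have "indep_var (PiM {..<k} (\<lambda>_. borel)) (\<lambda>\<omega>. restrict (\<lambda>i. xi i \<omega>) {..<k})
                    (PiM {k} (\<lambda>_. borel)) (\<lambda>\<omega>. restrict (\<lambda>i. xi i \<omega>) {k})"
      by (rule indep_var_restrict[OF ind0]) auto
    define Fk where "Fk f = (if x \<le> sg * (\<Sum>i<k. f i) \<and> (\<forall>j\<in>{..<k}. sg * (\<Sum>i<j. f i) < x)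
       then ennreal (exp (lam * (sg * (\<Sum>i<k. f i)))) else 0)" for f :: "nat \<Rightarrow> real"
    define Gk where "Gk f = ennreal (exp (lam * sg * f k))" for f :: "nat \<Rightarrow> real"
    have FkM: "Fk \<in> borel_measurable (PiM {..<k} (\<lambda>_. borel))"
      unfolding Fk_def by (measurable; (intro comp_meas_PiM)?)
    have GkM: "Gk \<in> borel_measurable (PiM {k} (\<lambda>_. borel))"
      unfolding Gk_def by (measurable; (intro comp_meas_PiM)?)
    have ind: "indep_var borel (Fk \<circ> (\<lambda>\<omega>. restrict (\<lambda>i. xi i \<omega>) {..<k}))
                    borel (Gk \<circ> (\<lambda>\<omega>. restrict (\<lambda>i. xi i \<omega>) {k}))"
      by (rule indep_var_compose[OF \<open>indep_var _ _ _ _\<close> FkM GkM])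
    have sumxi: "(\<Sum>i<j. xi i \<omega>) = W (u j) \<omega> - W (u 0) \<omega>" if "j \<le> k" for j \<omega>
    proof -
      have "(\<Sum>i<j. xi i \<omega>) = (\<Sum>i<j. W (u (Suc i)) \<omega> - W (u i) \<omega>)"
        using that by (intro sum.cong) (auto simp: xi_def v_def)
      also have "\<dots> = W (u j) \<omega> - W (u 0) \<omega>"
        by (rule sum_lessThan_telescope)
      finally show ?thesis .
    qed
    have F_eq: "(Fk \<circ> (\<lambda>\<omega>. restrict (\<lambda>i. xi i \<omega>) {..<k})) \<omega> = ennreal (exp (lam * S k \<omega>)) * indicator (A k) \<omega>"
      if "\<omega> \<in> space M" for \<omega>
    proof -
      have r: "(\<Sum>i<j. restrict (\<lambda>i. xi i \<omega>) {..<k} i) = W (u j) \<omega> - W (u 0) \<omega>" if "j \<le> k" for j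
      proof -
        have "(\<Sum>i<j. restrict (\<lambda>i. xi i \<omega>) {..<k} i) = (\<Sum>i<j. xi i \<omega>)"
          using that by (intro sum.cong) auto
        then show ?thesis using sumxi[OF that] by simp
      qed
      show ?thesis using \<open>\<omega> \<in> space M\<close>
        by (auto simp: Fk_def A_def indicator_def S_def sumxi)
    qed
    have G_eq: "(Gk \<circ> (\<lambda>\<omega>. restrict (\<lambda>i. xi i \<omega>) {k})) \<omega> = ennreal (exp (lam * sg * (W (u N) \<omega> - W (u k) \<omega>)))" for \<omega>
      by (simp add: Gk_def xi_def v_def)
    have indeq: "(\<integral>\<^sup>+\<omega>. (Fk \<circ> (\<lambda>\<omega>. restrict (\<lambda>i. xi i \<omega>) {..<k})) \<omega> * (Gk \<circ> (\<lambda>\<omega>. restrict (\<lambda>i. xi i \<omega>) {k})) \<omega> \<partial>M)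
        = (\<integral>\<^sup>+\<omega>. (Fk \<circ> (\<lambda>\<omega>. restrict (\<lambda>i. xi i \<omega>) {..<k})) \<omega> \<partial>M) * (\<integral>\<^sup>+\<omega>. (Gk \<circ> (\<lambda>\<omega>. restrict (\<lambda>i. xi i \<omega>) {k})) \<omega> \<partial>M)"
      by (rule indep_var_nn_integral_mult[OF ind])
    have ukN: "u k < u N" using strict_mono_upto[OF inc kN] by simp
    have distr: "distributed M lborel (\<lambda>\<omega>. W (u N) \<omega> - W (u k) \<omega>) (normal_density 0 (sqrt (u N - u k)))"
      using BM ukN uin[OF k] uN unfolding std_BM_def by auto
    have Gint: "(\<integral>\<^sup>+\<omega>. (Gk \<circ> (\<lambda>\<omega>. restrict (\<lambda>i. xi i \<omega>) {k})) \<omega> \<partial>M) = ennreal (exp ((lam * sg)^2 * (sqrt (u N - u k))^2 / 2))"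
      unfolding G_eq using normal_mgf[OF distr, of "lam * sg"] ukN by (simp add: mult.assoc)
    have Gge: "1 \<le> (\<integral>\<^sup>+\<omega>. (Gk \<circ> (\<lambda>\<omega>. restrict (\<lambda>i. xi i \<omega>) {k})) \<omega> \<partial>M)"
      unfolding Gint using ukN lam by (simp add: zero_le_mult_iff)
    have "(\<integral>\<^sup>+\<omega>. ennreal (exp (lam * S k \<omega>)) * indicator (A k) \<omega> \<partial>M)
        = (\<integral>\<^sup>+\<omega>. (Fk \<circ> (\<lambda>\<omega>. restrict (\<lambda>i. xi i \<omega>) {..<k})) \<omega> \<partial>M)"
      by (intro nn_integral_cong) (simp only: F_eq)
    also have "\<dots> \<le> (\<integral>\<^sup>+\<omega>. (Fk \<circ> (\<lambda>\<omega>. restrict (\<lambda>i. xi i \<omega>) {..<k})) \<omega> \<partial>M) * (\<integral>\<^sup>+\<omega>. (Gk \<circ> (\<lambda>\<omega>. restrict (\<lambda>i. xi i \<omega>) {k})) \<omega> \<partial>M)"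
      using mult_left_mono[OF Gge, of "(\<integral>\<^sup>+\<omega>. (Fk \<circ> (\<lambda>\<omega>. restrict (\<lambda>i. xi i \<omega>) {..<k})) \<omega> \<partial>M)"] by simp
    also have "\<dots> = (\<integral>\<^sup>+\<omega>. (Fk \<circ> (\<lambda>\<omega>. restrict (\<lambda>i. xi i \<omega>) {..<k})) \<omega> * (Gk \<circ> (\<lambda>\<omega>. restrict (\<lambda>i. xi i \<omega>) {k})) \<omega> \<partial>M)"
      by (rule indeq[symmetric])
    also have "\<dots> = (\<integral>\<^sup>+\<omega>. ennreal (exp (lam * S N \<omega>)) * indicator (A k) \<omega> \<partial>M)"
    proof (intro nn_integral_cong)
      fix \<omega> assume "\<omega> \<in> space M"
      have "exp (lam * S k \<omega>) * exp (lam * sg * (W (u N) \<omega> - W (u k) \<omega>)) = exp (lam * S N \<omega>)"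
        by (simp add: S_def exp_add[symmetric] algebra_simps)
      then show "(Fk \<circ> (\<lambda>\<omega>. restrict (\<lambda>i. xi i \<omega>) {..<k})) \<omega> * (Gk \<circ> (\<lambda>\<omega>. restrict (\<lambda>i. xi i \<omega>) {k})) \<omega>
          = ennreal (exp (lam * S N \<omega>)) * indicator (A k) \<omega>"
        using \<open>\<omega> \<in> space M\<close>
        by (simp only: F_eq G_eq) (simp add: indicator_def ennreal_mult[symmetric])
    qed
    finally show ?thesis .
  qed
  have disj: "disjoint_family_on A {..N}"
    unfolding disjoint_family_on_def
  proof (intro ballI impI)
    fix m n assume "m \<in> {..N}" "n \<in> {..N}" "m \<noteq> n"
    then consider "m < n" | "n < m" by linarith
    then show "A m \<inter> A n = {}"
      by cases (auto simp: A_def; meson lessThan_iff not_le)+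
  qed
  have pw1: "ennreal (exp (lam * x)) * indicator {\<omega>\<in>space M. x \<le> Mx \<omega>} \<omega>
      \<le> (\<Sum>k\<le>N. ennreal (exp (lam * S k \<omega>)) * indicator (A k) \<omega>)" if "\<omega> \<in> space M" for \<omega>
  proof (cases "x \<le> Mx \<omega>")
    case False then show ?thesis by simp
  next
    case True
    have "Mx \<omega> \<in> (\<lambda>j. S j \<omega>) ` {..N}" unfolding Mx_def by (rule Max_in) auto
    then obtain j where j: "j \<le> N" "S j \<omega> = Mx \<omega>" by auto
    define k0 where "k0 = (LEAST k. x \<le> S k \<omega>)"
    have xk0: "x \<le> S k0 \<omega>" unfolding k0_def by (rule LeastI[of _ j]) (use j True in auto)
    have k0j: "k0 \<le> j" unfolding k0_def by (rule Least_le) (use j True in auto)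
    have lt: "S i \<omega> < x" if "i < k0" for i
      using not_less_Least[OF that[unfolded k0_def]] by (simp add: k0_def)
    have inA: "\<omega> \<in> A k0" using that xk0 lt by (auto simp: A_def)
    have "ennreal (exp (lam * x)) * indicator {\<omega>\<in>space M. x \<le> Mx \<omega>} \<omega> = ennreal (exp (lam * x))"
      using True that by simp
    also have "\<dots> \<le> ennreal (exp (lam * S k0 \<omega>)) * indicator (A k0) \<omega>"
      using inA xk0 lam by (simp add: mult_left_mono)
    also have "\<dots> \<le> (\<Sum>k\<le>N. ennreal (exp (lam * S k \<omega>)) * indicator (A k) \<omega>)"
      by (rule member_le_sum) (use k0j j in auto)
    finally show ?thesis .
  qed
  have pw2: "(\<Sum>k\<le>N. ennreal (exp (lam * S N \<omega>)) * indicator (A k) \<omega>) \<le> ennreal (exp (lam * S N \<omega>))" for \<omega>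
  proof -
    have "(\<Sum>k\<le>N. ennreal (exp (lam * S N \<omega>)) * indicator (A k) \<omega>)
        = ennreal (exp (lam * S N \<omega>)) * (\<Sum>k\<le>N. indicator (A k) \<omega>)"
      by (simp add: sum_distrib_left)
    also have "(\<Sum>k\<le>N. indicator (A k) \<omega> :: ennreal) = indicator (\<Union>(A ` {..N})) \<omega>"
      by (rule indicator_UN_disjoint[symmetric]) (auto intro: disj)
    also have "ennreal (exp (lam * S N \<omega>)) * indicator (\<Union>(A ` {..N})) \<omega> \<le> ennreal (exp (lam * S N \<omega>))"
      by (simp add: indicator_def)
    finally show ?thesis .
  qed
  have mk: "(\<lambda>\<omega>. ennreal (exp (lam * S k \<omega>)) * indicator (A k) \<omega>) \<in> borel_measurable M" if "k \<le> N" for k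
    using Sm[OF that] Asets[OF that] by measurable
  have mk2: "(\<lambda>\<omega>. ennreal (exp (lam * S N \<omega>)) * indicator (A k) \<omega>) \<in> borel_measurable M" if "k \<le> N" for k
    using Sm[of N] Asets[OF that] by measurable
  have distr0: "distributed M lborel (\<lambda>\<omega>. W (u N) \<omega> - W (u 0) \<omega>) (normal_density 0 (sqrt (u N - u 0)))"
    using BM strict_mono_upto[OF inc N] u0 uN unfolding std_BM_def by auto
  have u0N: "u 0 < u N" using strict_mono_upto[OF inc N] by simp
  have "ennreal (exp (lam * x)) * emeasure M {\<omega>\<in>space M. x \<le> Mx \<omega>}
      = (\<integral>\<^sup>+\<omega>. ennreal (exp (lam * x)) * indicator {\<omega>\<in>space M. x \<le> Mx \<omega>} \<omega> \<partial>M)"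
    by (rule nn_integral_cmult_indicator[OF Bset, symmetric])
  also have "\<dots> \<le> (\<integral>\<^sup>+\<omega>. (\<Sum>k\<le>N. ennreal (exp (lam * S k \<omega>)) * indicator (A k) \<omega>) \<partial>M)"
    by (rule nn_integral_mono) (rule pw1)
  also have "\<dots> = (\<Sum>k\<le>N. (\<integral>\<^sup>+\<omega>. ennreal (exp (lam * S k \<omega>)) * indicator (A k) \<omega> \<partial>M))"
    by (rule nn_integral_sum) (auto intro: mk)
  also have "\<dots> \<le> (\<Sum>k\<le>N. (\<integral>\<^sup>+\<omega>. ennreal (exp (lam * S N \<omega>)) * indicator (A k) \<omega> \<partial>M))"
    by (rule sum_mono) (rule key, simp)
  also have "\<dots> = (\<integral>\<^sup>+\<omega>. (\<Sum>k\<le>N. ennreal (exp (lam * S N \<omega>)) * indicator (A k) \<omega>) \<partial>M)"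
    by (rule nn_integral_sum[symmetric]) (auto intro: mk2)
  also have "\<dots> \<le> (\<integral>\<^sup>+\<omega>. ennreal (exp (lam * S N \<omega>)) \<partial>M)"
    by (rule nn_integral_mono) (rule pw2)
  also have "\<dots> = ennreal (exp ((lam * sg)^2 * (sqrt (u N - u 0))^2 / 2))"
    unfolding S_def using normal_mgf[OF distr0, of "lam * sg"] u0N by (simp add: mult.assoc)
  also have "\<dots> = ennreal C"
    using u0N sg2 by (simp add: C_def power_mult_distrib)
  finally have fin: "ennreal (exp (lam * x)) * emeasure M {\<omega>\<in>space M. x \<le> Mx \<omega>} \<le> ennreal C" .
  have "emeasure M {\<omega>\<in>space M. x \<le> Mx \<omega>}
      = ennreal (exp (- lam * x)) * (ennreal (exp (lam * x)) * emeasure M {\<omega>\<in>space M. x \<le> Mx \<omega>})"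
    by (simp add: mult.assoc[symmetric] ennreal_mult[symmetric] exp_add[symmetric])
  also have "\<dots> \<le> ennreal (exp (- lam * x)) * ennreal C"
    by (rule mult_left_mono[OF fin]) simp
  finally show ?thesis
    by (simp add: Mx_def S_def C_def ennreal_mult)
qed


definition Kc :: "real \<Rightarrow> real \<Rightarrow> real" where
  "Kc mu T = exp mu * exp ((mu + 1)^2 * T / 2) / (1 - exp (-1))"

lemma Kc_ge1: "0 \<le> mu \<Longrightarrow> 0 \<le> T \<Longrightarrow> 1 \<le> Kc mu T"
proof -
  assume a: "0 \<le> mu" "0 \<le> T"
  have e: "exp (-1::real) < 1" by simp
  have "1 \<le> exp mu * exp ((mu + 1)^2 * T / 2)" using a
    by (metis exp_ge_one_plus_x_over_n_power_n exp_add exp_ge_zero le_add_same_cancel1 one_le_exp_iff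
        add_nonneg_nonneg divide_nonneg_pos mult_nonneg_nonneg zero_le_power2 zero_less_numeral)
  also have "\<dots> \<le> exp mu * exp ((mu + 1)^2 * T / 2) / (1 - exp (-1))"
    using e by (simp add: le_divide_eq)
  finally show ?thesis unfolding Kc_def .
qed

lemma ennreal_le_suminf: "(f i :: ennreal) \<le> (\<Sum>i. f i)"
  by (metis ennreal_suminf_lessD less_irrefl not_le)

lemma grid_max_bound:
  fixes M :: "'w measure" and W :: "real \<Rightarrow> 'w \<Rightarrow> real" and u :: "nat \<Rightarrow> real"
  assumes BM: "std_BM M T W" and sg: "sg = 1 \<or> sg = -1" and mu: "0 \<le> mu"
    and u0: "0 \<le> u 0" and uN: "u N \<le> T" and inc: "\<forall>i<N. u i < u (Suc i)" and N: "0 < N"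
  shows "(\<integral>\<^sup>+\<omega>. ennreal (exp (mu * Max ((\<lambda>j. sg * (W (u j) \<omega> - W (u 0) \<omega>)) ` {..N}))) \<partial>M) \<le> ennreal (Kc mu T)"
proof -
  interpret prob_space M using BM unfolding std_BM_def by auto
  have uin: "0 \<le> u j \<and> u j \<le> T" if "j \<le> N" for j
    using mono_upto[OF inc, of 0 j] mono_upto[OF inc, of j N] that u0 uN by auto
  have Wm: "W (u j) \<in> borel_measurable M" if "j \<le> N" for j
    using BM uin[OF that] unfolding std_BM_def by auto
  define Mx where "Mx \<omega> = Max ((\<lambda>j. sg * (W (u j) \<omega> - W (u 0) \<omega>)) ` {..N})" for \<omega>
  have Mxm: "Mx \<in> borel_measurable M"
    unfolding Mx_def by (rule borel_measurable_Max) (use Wm in auto)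
  have Mx0: "0 \<le> Mx \<omega>" for \<omega>
  proof -
    have "sg * (W (u 0) \<omega> - W (u 0) \<omega>) \<le> Mx \<omega>" unfolding Mx_def by (rule Max_ge) auto
    then show ?thesis by simp
  qed
  define lam where "lam = mu + 1"
  define CT where "CT = exp (lam^2 * T / 2)"
  have sets: "{\<omega>\<in>space M. real i \<le> Mx \<omega>} \<in> sets M" for i using Mxm by measurable
  have pw: "ennreal (exp (mu * Mx \<omega>)) \<le> (\<Sum>i. ennreal (exp (mu * (real i + 1))) * indicator {\<omega>\<in>space M. real i \<le> Mx \<omega>} \<omega>)"
    if "\<omega> \<in> space M" for \<omega>
  proof -
    define i0 where "i0 = nat \<lfloor>Mx \<omega>\<rfloor>"
    have i0: "real i0 \<le> Mx \<omega>" "Mx \<omega> < real i0 + 1" using Mx0[of \<omega>] unfolding i0_def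
      by (simp_all add: of_nat_nat)
    have "ennreal (exp (mu * Mx \<omega>)) \<le> ennreal (exp (mu * (real i0 + 1)))"
      using i0 mu by (intro ennreal_leI) (simp add: mult_left_mono)
    also have "\<dots> = ennreal (exp (mu * (real i0 + 1))) * indicator {\<omega>\<in>space M. real i0 \<le> Mx \<omega>} \<omega>"
      using i0 that by simp
    also have "\<dots> \<le> (\<Sum>i. ennreal (exp (mu * (real i + 1))) * indicator {\<omega>\<in>space M. real i \<le> Mx \<omega>} \<omega>)"
      by (rule ennreal_le_suminf)
    finally show ?thesis .
  qed
  have lev: "emeasure M {\<omega>\<in>space M. real i \<le> Mx \<omega>} \<le> ennreal (exp (- lam * real i) * CT)" for i
  proof -
    have "emeasure M {\<omega>\<in>space M. real i \<le> Mx \<omega>} \<le> ennreal (exp (- lam * real i) * exp (lam^2 * (u N - u 0) / 2))"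
      unfolding Mx_def by (rule level_bound[OF BM sg _ u0 uN inc N]) (simp add: lam_def mu)
    also have "\<dots> \<le> ennreal (exp (- lam * real i) * CT)"
      unfolding CT_def using u0 uN by (intro ennreal_leI mult_left_mono) (auto simp: divide_right_mono mult_left_mono)
    finally show ?thesis .
  qed
  have q: "exp (-1::real) < 1" by simp
  have geo: "(\<Sum>i. exp mu * CT * exp (-1) ^ i) = exp mu * CT / (1 - exp (-1))"
    using q by (simp add: suminf_mult suminf_geometric divide_inverse)
  have "(\<integral>\<^sup>+\<omega>. ennreal (exp (mu * Mx \<omega>)) \<partial>M)
      \<le> (\<integral>\<^sup>+\<omega>. (\<Sum>i. ennreal (exp (mu * (real i + 1))) * indicator {\<omega>\<in>space M. real i \<le> Mx \<omega>} \<omega>) \<partial>M)"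
    by (rule nn_integral_mono) (rule pw)
  also have "\<dots> = (\<Sum>i. (\<integral>\<^sup>+\<omega>. ennreal (exp (mu * (real i + 1))) * indicator {\<omega>\<in>space M. real i \<le> Mx \<omega>} \<omega> \<partial>M))"
    by (rule nn_integral_suminf) (use sets in measurable)
  also have "\<dots> = (\<Sum>i. ennreal (exp (mu * (real i + 1))) * emeasure M {\<omega>\<in>space M. real i \<le> Mx \<omega>})"
    using sets by (simp add: nn_integral_cmult_indicator)
  also have "\<dots> \<le> (\<Sum>i. ennreal (exp (mu * (real i + 1))) * ennreal (exp (- lam * real i) * CT))"
    by (intro suminf_le mult_left_mono lev) auto
  also have "\<dots> = (\<Sum>i. ennreal (exp mu * CT * exp (-1) ^ i))"
  proof (intro suminf_cong)
    fix i
    have "exp (mu * (real i + 1)) * (exp (- lam * real i) * CT) = exp mu * CT * exp (-1) ^ i"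
      by (simp add: lam_def exp_of_nat_mult[symmetric] exp_add[symmetric] algebra_simps)
    then show "ennreal (exp (mu * (real i + 1))) * ennreal (exp (- lam * real i) * CT) = ennreal (exp mu * CT * exp (-1) ^ i)"
      by (simp add: ennreal_mult[symmetric] CT_def)
  qed
  also have "\<dots> = ennreal (exp mu * CT / (1 - exp (-1)))"
  proof -
    have CT0: "0 \<le> CT" by (simp add: CT_def)
    show ?thesis using q CT0 by (subst suminf_ennreal2) (auto simp: geo intro!: summable_mult summable_geometric)
  qed
  also have "\<dots> = ennreal (Kc mu T)" by (simp add: Kc_def CT_def lam_def)
  finally show ?thesis unfolding Mx_def .
qed



lemma sup_bound:
  fixes M :: "'w measure" and W :: "real \<Rightarrow> 'w \<Rightarrow> real"
  assumes BM: "std_BM M T W" and sg: "sg = 1 \<or> sg = -1" and mu: "0 \<le> mu" and T: "0 < T"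
    and t: "t \<in> {0..T}"
  shows "\<exists>L. L \<in> borel_measurable M \<and> (\<integral>\<^sup>+\<omega>. L \<omega> \<partial>M) \<le> ennreal (Kc mu T) \<and>
     (\<forall>\<omega>\<in>space M. \<forall>s\<in>{t..T}. ennreal (exp (mu * (sg * (W s \<omega> - W t \<omega>)))) \<le> L \<omega>)"
proof -
  interpret prob_space M using BM unfolding std_BM_def by auto
  show ?thesis
  proof (cases "t = T")
    case True
    show ?thesis
    proof (intro exI[of _ "\<lambda>_. 1"] conjI)
      have "1 \<le> ennreal (Kc mu T)" using Kc_ge1[of mu T] T mu by (metis ennreal_1 ennreal_leI less_imp_le)
      then show "(\<integral>\<^sup>+\<omega>. 1 \<partial>M) \<le> ennreal (Kc mu T)" by (simp add: emeasure_space_1)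
      show "(\<lambda>_. 1) \<in> borel_measurable M" by simp
      show "\<forall>\<omega>\<in>space M. \<forall>s\<in>{t..T}. ennreal (exp (mu * (sg * (W s \<omega> - W t \<omega>)))) \<le> 1"
      proof (intro ballI)
        fix \<omega> s assume "s \<in> {t..T}"
        then have "s = t" using True by simp
        then show "ennreal (exp (mu * (sg * (W s \<omega> - W t \<omega>)))) \<le> 1" by simp
      qed
    qed
  next
    case False
    then have tT: "t < T" "0 \<le> t" using t by auto
    define g where "g m j = t + (T - t) * real j / 2^m" for m :: nat and j :: nat
    have g0: "g m 0 = t" for m by (simp add: g_def)
    have gin: "0 \<le> g m j \<and> g m j \<le> T" if "j \<le> 2^m" for m j
    proof -
      have "real j / 2^m \<le> 1" using that by (simp add: divide_le_eq_1)
      then have "(T - t) * (real j / 2^m) \<le> (T - t) * 1" using tT by (intro mult_left_mono) auto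
      then show ?thesis using tT by (auto simp: g_def)
    qed
    have ginc: "\<forall>i<2^m. g m i < g m (Suc i)" for m
      using tT by (auto simp: g_def divide_strict_right_mono)
    have Wm: "W (g m j) \<in> borel_measurable M" if "j \<le> 2^m" for m j
      using BM gin[OF that] unfolding std_BM_def by auto
    define F where "F m \<omega> = ennreal (exp (mu * Max ((\<lambda>j. sg * (W (g m j) \<omega> - W (g m 0) \<omega>)) ` {..2^m})))" for m \<omega>
    have Fm: "F m \<in> borel_measurable M" for m
    proof -
      have "(\<lambda>\<omega>. Max ((\<lambda>j. sg * (W (g m j) \<omega> - W (g m 0) \<omega>)) ` {..2^m})) \<in> borel_measurable M"
        by (rule borel_measurable_Max) (use Wm in auto)
      then show ?thesis unfolding F_def by measurable
    qed
    have Fint: "(\<integral>\<^sup>+\<omega>. F m \<omega> \<partial>M) \<le> ennreal (Kc mu T)" for m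
      unfolding F_def
      by (rule grid_max_bound[OF BM sg mu]) (use gin[of 0 m] gin[of "2^m" m] ginc in auto)
    define L where "L \<omega> = liminf (\<lambda>m. F m \<omega>)" for \<omega>
    have Lm: "L \<in> borel_measurable M" unfolding L_def by (rule borel_measurable_liminf) (rule Fm)
    have Lint: "(\<integral>\<^sup>+\<omega>. L \<omega> \<partial>M) \<le> ennreal (Kc mu T)"
    proof -
      have "(\<integral>\<^sup>+\<omega>. L \<omega> \<partial>M) \<le> liminf (\<lambda>m. \<integral>\<^sup>+\<omega>. F m \<omega> \<partial>M)"
        unfolding L_def by (rule nn_integral_liminf) (rule Fm)
      also have "\<dots> \<le> limsup (\<lambda>m. \<integral>\<^sup>+\<omega>. F m \<omega> \<partial>M)" by (rule Liminf_le_Limsup) simp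
      also have "\<dots> \<le> ennreal (Kc mu T)" by (rule Limsup_bounded) (simp add: Fint)
      finally show ?thesis .
    qed
    have pw: "ennreal (exp (mu * (sg * (W s \<omega> - W t \<omega>)))) \<le> L \<omega>" if \<omega>: "\<omega> \<in> space M" and s: "s \<in> {t..T}" for \<omega> s
    proof -
      define f where "f r = exp (mu * (sg * (W r \<omega> - W t \<omega>)))" for r
      have contW: "continuous_on {0..T} (\<lambda>r. W r \<omega>)" using BM \<omega> unfolding std_BM_def by auto
      have cW: "continuous_on {t..T} (\<lambda>r. W r \<omega>)"
        by (rule continuous_on_subset[OF contW]) (use tT in auto)
      have contf: "continuous_on {t..T} f"
        unfolding f_def by (intro continuous_on_exp continuous_on_mult continuous_on_const continuous_on_diff cW)
      define jm where "jm m = nat \<lfloor>(s - t) * 2^m / (T - t)\<rfloor>" for m :: nat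
      define h where "h m = g m (jm m)" for m
      have hfacts: "jm m \<le> 2^m \<and> t \<le> h m \<and> h m \<le> s \<and> s - (T - t) / 2^m \<le> h m" for m
      proof -
        define y where "y = (s - t) * 2^m / (T - t)"
        have y0: "0 \<le> y" using s tT by (simp add: y_def)
        have y1: "y \<le> 2^m"
        proof -
          have "(s - t) * 2^m \<le> (T - t) * 2^m" using s by (intro mult_right_mono) auto
          then show ?thesis using tT by (simp add: y_def divide_le_eq mult.commute)
        qed
        have fl: "real (jm m) \<le> y" "y < real (jm m) + 1" using y0 unfolding jm_def y_def[symmetric]
          by (simp_all add: of_nat_nat)
        have j2: "jm m \<le> 2^m"
        proof -
          have "real (jm m) \<le> real (2^m)" unfolding of_nat_power of_nat_numeral using fl y1 by linarith
          then show ?thesis by (simp only: of_nat_le_iff)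
        qed
        have hy: "h m = t + (T - t) * real (jm m) / 2^m" by (simp add: h_def g_def)
        have sy: "s = t + (T - t) * y / 2^m" using tT by (simp add: y_def)
        have a1: "(T - t) * real (jm m) / 2^m \<le> (T - t) * y / 2^m"
          using fl tT by (intro divide_right_mono mult_left_mono) auto
        have a2: "(T - t) * y / 2^m - (T - t) / 2^m \<le> (T - t) * real (jm m) / 2^m"
        proof -
          have "(T - t) * (y - 1) \<le> (T - t) * real (jm m)" using fl tT by (intro mult_left_mono) auto
          then show ?thesis by (simp add: diff_divide_distrib[symmetric] right_diff_distrib divide_right_mono)
        qed
        show ?thesis using j2 hy sy a1 a2 tT by (auto simp: zero_le_mult_iff)
      qed
      have lim0: "(\<lambda>m. s - (T - t) / 2^m) \<longlonglongrightarrow> s"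
      proof -
        have "(\<lambda>m::nat. (T - t) * (1/2::real)^m) \<longlonglongrightarrow> (T - t) * 0"
          by (rule tendsto_mult[OF tendsto_const LIMSEQ_realpow_zero]) auto
        moreover have "(\<lambda>m::nat. (T - t) * (1/2::real)^m) = (\<lambda>m::nat. (T - t) / 2^m)"
          by (simp add: power_divide)
        ultimately have "(\<lambda>m::nat. (T - t) / 2^m) \<longlonglongrightarrow> 0" by simp
        from tendsto_diff[OF tendsto_const[of s] this] show ?thesis by simp
      qed
      have hlim: "h \<longlonglongrightarrow> s"
        by (rule tendsto_sandwich[OF _ _ lim0 tendsto_const]) (use hfacts in auto)
      have hin: "h m \<in> {t..T}" for m using hfacts[of m] s by auto
      have flim: "(\<lambda>m. f (h m)) \<longlonglongrightarrow> f s"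
        by (rule continuous_on_tendsto_compose[OF contf hlim s]) (use hin in \<open>simp only: always_eventually eventually_True\<close>)
      then have flim2: "(\<lambda>m. ennreal (f (h m))) \<longlonglongrightarrow> ennreal (f s)"
        by (rule tendsto_ennrealI)
      have "ennreal (f s) = liminf (\<lambda>m. ennreal (f (h m)))"
        by (rule lim_imp_Liminf[symmetric]) (auto intro: flim2)
      also have "\<dots> \<le> L \<omega>"
        unfolding L_def
      proof (rule Liminf_mono, intro always_eventually allI)
        fix m
        have "sg * (W (g m (jm m)) \<omega> - W (g m 0) \<omega>) \<le> Max ((\<lambda>j. sg * (W (g m j) \<omega> - W (g m 0) \<omega>)) ` {..2^m})"
          by (rule Max_ge) (use hfacts[of m] in auto)
        then show "ennreal (f (h m)) \<le> F m \<omega>"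
          unfolding F_def f_def h_def g0 using mu by (intro ennreal_leI) (simp add: mult_left_mono)
      qed
      finally show ?thesis by (simp add: f_def)
    qed
    show ?thesis by (intro exI[of _ L]) (use Lm Lint pw in auto)
  qed
qed



lemma exp_c_bound:
  fixes x c :: real assumes "0 \<le> c" "c \<le> 1"
  shows "\<bar>exp (x * c) - 1\<bar> \<le> \<bar>exp x - 1\<bar>"
proof (cases "0 \<le> x")
  case True
  have "x * c \<le> x" using assms True by (simp add: mult_left_le)
  moreover have "0 \<le> x * c" using assms True by simp
  ultimately show ?thesis by simp
next
  case False
  have "x \<le> x * c" using assms False by (simp add: mult_left_le_one_le mult_le_cancel_left1)
  moreover have "x * c \<le> 0" using assms False by (simp add: mult_nonpos_nonneg)
  ultimately show ?thesis by simp
qed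

lemma diff_bound:
  fixes a a' e e' c Z G :: real
  assumes a: "0 < a" and c: "0 < c" "c \<le> 1" and G: "0 < G"
  shows "\<bar>a * G * exp (e * c + Z) - a' * G * exp (e' * c + Z)\<bar>
     \<le> G * exp Z * exp \<bar>e'\<bar> * (\<bar>a - a'\<bar> + a * \<bar>exp (e - e') - 1\<bar>)"
proof -
  have eq: "a * G * exp (e * c + Z) - a' * G * exp (e' * c + Z)
      = G * exp Z * exp (e' * c) * ((a - a') + a * (exp ((e - e') * c) - 1))"
    by (simp add: exp_add algebra_simps exp_diff[symmetric] left_diff_distrib)
       (simp add: exp_add[symmetric] algebra_simps)
  have "\<bar>(a - a') + a * (exp ((e - e') * c) - 1)\<bar> \<le> \<bar>a - a'\<bar> + a * \<bar>exp ((e - e') * c) - 1\<bar>"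
    using a by (simp add: abs_triangle_ineq[THEN order_trans] abs_mult)
  also have "\<dots> \<le> \<bar>a - a'\<bar> + a * \<bar>exp (e - e') - 1\<bar>"
    using exp_c_bound[of c "e - e'"] c a by (simp add: mult_left_mono)
  finally have b1: "\<bar>(a - a') + a * (exp ((e - e') * c) - 1)\<bar> \<le> \<bar>a - a'\<bar> + a * \<bar>exp (e - e') - 1\<bar>" .
  have b2: "exp (e' * c) \<le> exp \<bar>e'\<bar>"
  proof -
    have "e' * c \<le> \<bar>e'\<bar>"
      using c by (metis abs_ge_self abs_mult abs_of_pos mult.commute mult_left_le order_trans abs_ge_zero)
    then show ?thesis by simp
  qed
  have "\<bar>a * G * exp (e * c + Z) - a' * G * exp (e' * c + Z)\<bar>
      = G * exp Z * exp (e' * c) * \<bar>(a - a') + a * (exp ((e - e') * c) - 1)\<bar>"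
    unfolding eq using G by (simp add: abs_mult)
  also have "\<dots> \<le> G * exp Z * exp \<bar>e'\<bar> * (\<bar>a - a'\<bar> + a * \<bar>exp (e - e') - 1\<bar>)"
    using G b1 b2 by (intro mult_mono mult_left_mono) auto
  finally show ?thesis .
qed

lemma powr_sum_le:
  fixes x y p :: real assumes "0 \<le> x" "0 \<le> y" "0 \<le> p"
  shows "(x + y) powr p \<le> 2 powr p * (x powr p + y powr p)"
proof -
  have "(x + y) powr p \<le> (2 * max x y) powr p" using assms by (intro powr_mono2) auto
  also have "\<dots> = 2 powr p * max x y powr p" using assms by (simp add: powr_mult)
  also have "\<dots> \<le> 2 powr p * (x powr p + y powr p)"
    by (intro mult_left_mono) (auto simp: max_def)
  finally show ?thesis .
qed

lemma exp_sum_le: "exp (p * (x + y)) \<le> exp (2 * p * x) + exp (2 * p * y)" for p x y :: real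
proof -
  have "p * (x + y) \<le> max (2 * p * x) (2 * p * y)" by (auto simp: max_def algebra_simps)
  then have "exp (p * (x + y)) \<le> max (exp (2 * p * x)) (exp (2 * p * y))" by (auto simp: max_def)
  then show ?thesis by (smt (verit) exp_gt_zero)
qed



lemma pathwise_S:
  fixes Wa Wb :: "real \<Rightarrow> 'w \<Rightarrow> real"
  assumes c1: "continuous_on {0..T} (\<lambda>s. Wa s \<omega>)" and c2: "continuous_on {0..T} (\<lambda>s. Wb s \<omega>)"
    and t: "0 \<le> t" and r: "t \<le> r" "r \<le> T" and a: "0 < a" and k: "0 < k" and s1: "0 < sig1" and s2: "0 < sig2"
    and rho: "-1 \<le> rho" "rho \<le> 1"
    and Xa: "\<forall>s\<in>{t..T}. \<bar>Wa s \<omega> - Wa t \<omega>\<bar> \<le> Xa" and Xb: "\<forall>s\<in>{t..T}. \<bar>Wb s \<omega> - Wb t \<omega>\<bar> \<le> Xb"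
  shows "\<bar>S_proc mu1 sig1 k sig2 rho Wa Wb t a e r \<omega> - S_proc mu1 sig1 k sig2 rho Wa Wb t a' e' r \<omega>\<bar>
     \<le> exp (\<bar>mu1 - sig1^2/2\<bar> * T + (sig1 + sig2 * (1 + k * T)) * (Xa + Xb)) * exp \<bar>e'\<bar>
        * (\<bar>a - a'\<bar> + a * \<bar>exp (e - e') - 1\<bar>)"
proof -
  define q where "q = sqrt (1 - rho^2)"
  have q: "0 \<le> q" "q \<le> 1" using rho by (auto simp: q_def abs_square_le_1)
  define B where "B s = rho * Wa s \<omega> + q * Wb s \<omega>" for s
  define I where "I = integral {t..r} (\<lambda>s. exp (- k * (r - s)) * (B s - B t))"
  define Z where "Z = sig2 * ((B r - B t) - k * I)"
  define G where "G = exp ((mu1 - sig1^2 / 2) * (r - t) + sig1 * (Wa r \<omega> - Wa t \<omega>))"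
  define c where "c = exp (- k * (r - t))"
  have Seq: "S_proc mu1 sig1 k sig2 rho Wa Wb t x y r \<omega> = x * G * exp (y * c + Z)" for x y
    unfolding S_proc_def A_proc_def eps_proc_def Let_def Z_def I_def B_def G_def c_def q_def
    by (simp add: mult.assoc)
  have Xa0: "0 \<le> Xa" using Xa t r by force
  have Xb0: "0 \<le> Xb" using Xb t r by force
  have Bb: "\<bar>B s - B t\<bar> \<le> Xa + Xb" if "s \<in> {t..T}" for s
  proof -
    have "B s - B t = rho * (Wa s \<omega> - Wa t \<omega>) + q * (Wb s \<omega> - Wb t \<omega>)"
      by (simp add: B_def algebra_simps)
    also have "\<bar>\<dots>\<bar> \<le> \<bar>rho\<bar> * \<bar>Wa s \<omega> - Wa t \<omega>\<bar> + q * \<bar>Wb s \<omega> - Wb t \<omega>\<bar>"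
      using q by (simp add: abs_triangle_ineq[THEN order_trans] abs_mult)
    also have "\<dots> \<le> 1 * Xa + 1 * Xb"
      using Xa Xb that rho q by (intro add_mono mult_mono) auto
    finally show ?thesis by simp
  qed
  have contB: "continuous_on {t..r} B"
  proof -
    have "continuous_on {t..r} (\<lambda>s. Wa s \<omega>)" "continuous_on {t..r} (\<lambda>s. Wb s \<omega>)"
      using c1 c2 t r by (auto intro: continuous_on_subset)
    then show ?thesis unfolding B_def by (intro continuous_on_add continuous_on_mult continuous_on_const)
  qed
  have Ib: "\<bar>I\<bar> \<le> (Xa + Xb) * (r - t)"
  proof -
    have "norm (integral {t..r} (\<lambda>s. exp (- k * (r - s)) * (B s - B t))) \<le> (Xa + Xb) * (r - t)"
    proof (rule integral_bound)
      show "t \<le> r" by fact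
      show "continuous_on {t..r} (\<lambda>s. exp (- k * (r - s)) * (B s - B t))"
        by (intro continuous_on_mult continuous_on_exp continuous_on_diff continuous_on_const
            continuous_on_id contB)
      fix s assume s: "s \<in> {t..r}"
      have e1: "exp (- k * (r - s)) \<le> 1" using s k by (simp add: mult_nonneg_nonneg)
      have "\<bar>exp (- k * (r - s)) * (B s - B t)\<bar> = exp (- k * (r - s)) * \<bar>B s - B t\<bar>" by (simp add: abs_mult)
      also have "\<dots> \<le> 1 * (Xa + Xb)" using e1 Bb[of s] s r by (intro mult_mono) auto
      finally show "norm (exp (- k * (r - s)) * (B s - B t)) \<le> Xa + Xb" by simp
    qed
    then show ?thesis by (simp add: I_def)
  qed
  have Zb: "Z \<le> sig2 * (1 + k * T) * (Xa + Xb)"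
  proof -
    have "(B r - B t) - k * I \<le> (Xa + Xb) + k * ((Xa + Xb) * (r - t))"
    proof -
      have "B r - B t \<le> Xa + Xb" using Bb[of r] r by auto
      moreover have "- (k * I) \<le> k * ((Xa + Xb) * (r - t))"
      proof -
        have "- (k * I) \<le> k * \<bar>I\<bar>" using k by (metis abs_ge_minus_self abs_mult abs_of_pos)
        also have "\<dots> \<le> k * ((Xa + Xb) * (r - t))" using Ib k by (intro mult_left_mono) auto
        finally show ?thesis .
      qed
      ultimately show ?thesis by simp
    qed
    also have "\<dots> \<le> (Xa + Xb) + k * ((Xa + Xb) * T)"
      using k Xa0 Xb0 r t by (intro add_left_mono mult_left_mono) auto
    also have "\<dots> = (1 + k * T) * (Xa + Xb)" by (simp add: algebra_simps)
    finally have "(B r - B t) - k * I \<le> (1 + k * T) * (Xa + Xb)" .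
    then have "sig2 * ((B r - B t) - k * I) \<le> sig2 * ((1 + k * T) * (Xa + Xb))"
      using s2 by (intro mult_left_mono) auto
    then show ?thesis unfolding Z_def by (simp only: mult.assoc)
  qed
  have Gb: "(mu1 - sig1^2 / 2) * (r - t) + sig1 * (Wa r \<omega> - Wa t \<omega>) \<le> \<bar>mu1 - sig1^2/2\<bar> * T + sig1 * (Xa + Xb)"
  proof -
    have "(mu1 - sig1^2 / 2) * (r - t) \<le> \<bar>mu1 - sig1^2/2\<bar> * T"
    proof -
      have "(mu1 - sig1^2 / 2) * (r - t) \<le> \<bar>mu1 - sig1^2/2\<bar> * (r - t)" using r by (intro mult_right_mono) auto
      also have "\<dots> \<le> \<bar>mu1 - sig1^2/2\<bar> * T" using r t by (intro mult_left_mono) auto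
      finally show ?thesis .
    qed
    moreover have "sig1 * (Wa r \<omega> - Wa t \<omega>) \<le> sig1 * (Xa + Xb)"
    proof -
      have "Wa r \<omega> - Wa t \<omega> \<le> Xa" using bspec[OF Xa, of r] r by (simp add: abs_le_iff)
      then show ?thesis using Xb0 s1 by (intro mult_left_mono) auto
    qed
    ultimately show ?thesis by simp
  qed
  have GZ: "G * exp Z \<le> exp (\<bar>mu1 - sig1^2/2\<bar> * T + (sig1 + sig2 * (1 + k * T)) * (Xa + Xb))"
  proof -
    have "G * exp Z = exp ((mu1 - sig1^2 / 2) * (r - t) + sig1 * (Wa r \<omega> - Wa t \<omega>) + Z)"
      by (simp add: G_def exp_add)
    also have "\<dots> \<le> exp (\<bar>mu1 - sig1^2/2\<bar> * T + (sig1 + sig2 * (1 + k * T)) * (Xa + Xb))"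
    proof -
      have "(mu1 - sig1^2 / 2) * (r - t) + sig1 * (Wa r \<omega> - Wa t \<omega>) + Z
          \<le> \<bar>mu1 - sig1^2/2\<bar> * T + sig1 * (Xa + Xb) + sig2 * (1 + k * T) * (Xa + Xb)"
        using Gb Zb by linarith
      also have "\<dots> = \<bar>mu1 - sig1^2/2\<bar> * T + (sig1 + sig2 * (1 + k * T)) * (Xa + Xb)"
        by (simp add: distrib_right)
      finally show ?thesis by simp
    qed
    finally show ?thesis .
  qed
  have c: "0 < c" "c \<le> 1" using k r by (auto simp: c_def)
  have "\<bar>S_proc mu1 sig1 k sig2 rho Wa Wb t a e r \<omega> - S_proc mu1 sig1 k sig2 rho Wa Wb t a' e' r \<omega>\<bar>
      \<le> G * exp Z * exp \<bar>e'\<bar> * (\<bar>a - a'\<bar> + a * \<bar>exp (e - e') - 1\<bar>)"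
    unfolding Seq by (rule diff_bound[OF a c]) (simp add: G_def)
  also have "\<dots> \<le> exp (\<bar>mu1 - sig1^2/2\<bar> * T + (sig1 + sig2 * (1 + k * T)) * (Xa + Xb)) * exp \<bar>e'\<bar>
        * (\<bar>a - a'\<bar> + a * \<bar>exp (e - e') - 1\<bar>)"
    using GZ a by (intro mult_right_mono) auto
  finally show ?thesis .
qed



theorem lemmaA2:
  fixes M :: "'w measure" and W1 W2 :: "real \<Rightarrow> 'w \<Rightarrow> real"
    and T mu1 sig1 k sig2 rho Q0 :: real
  assumes "T > 0" and "indep_BMs M T W1 W2"
    and "mu1 > 0" and "sig1 > 0" and "k > 0" and "sig2 > 0"
    and "-1 \<le> rho" and "rho \<le> 1" and "0 < Q0"
  shows "\<forall>p::real. p \<ge> 1 \<longrightarrow> (\<exists>C>0. \<forall>t\<in>{0..T}. \<forall>a e q a' e' q'.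
     (a, e, q) \<in> domO Q0 \<longrightarrow> (a', e', q') \<in> domO Q0 \<longrightarrow>
     (\<integral>\<^sup>+ \<omega>. (\<Squnion>r\<in>{t..T}. ennreal (\<bar>S_proc mu1 sig1 k sig2 rho W1 W2 t a e r \<omega>
                   - S_proc mu1 sig1 k sig2 rho W1 W2 t a' e' r \<omega>\<bar> powr p)) \<partial>M)
       \<le> ennreal (C * exp (p * \<bar>e'\<bar>) *
            (\<bar>a - a'\<bar> powr p + a powr p * \<bar>exp (e - e') - 1\<bar> powr p)))"
proof (intro allI impI)
  fix p :: real assume p: "1 \<le> p"
  have T: "0 < T" and k: "0 < k" and s1: "0 < sig1" and s2: "0 < sig2" and rho: "-1 \<le> rho" "rho \<le> 1"
    using assms by auto
  have BM1: "std_BM M T W1" and BM2: "std_BM M T W2" using assms(2) unfolding indep_BMs_def by auto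
  interpret prob_space M using BM1 unfolding std_BM_def by auto
  define c0 where "c0 = \<bar>mu1 - sig1^2/2\<bar> * T"
  define c1 where "c1 = sig1 + sig2 * (1 + k * T)"
  have c1: "0 < c1" using s1 s2 k T by (simp add: c1_def add_pos_nonneg)
  define mu where "mu = 2 * p * c1"
  have mu: "0 \<le> mu" using p c1 by (simp add: mu_def)
  define K where "K = Kc mu T"
  have K: "1 \<le> K" unfolding K_def using Kc_ge1[OF mu] T by simp
  define C where "C = 4 * K * 2 powr p * exp (p * c0)"
  have Cpos: "0 < C" using K by (simp add: C_def)
  show "\<exists>C>0. \<forall>t\<in>{0..T}. \<forall>a e q a' e' q'.
     (a, e, q) \<in> domO Q0 \<longrightarrow> (a', e', q') \<in> domO Q0 \<longrightarrow>
     (\<integral>\<^sup>+ \<omega>. (\<Squnion>r\<in>{t..T}. ennreal (\<bar>S_proc mu1 sig1 k sig2 rho W1 W2 t a e r \<omega>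
                   - S_proc mu1 sig1 k sig2 rho W1 W2 t a' e' r \<omega>\<bar> powr p)) \<partial>M)
       \<le> ennreal (C * exp (p * \<bar>e'\<bar>) *
            (\<bar>a - a'\<bar> powr p + a powr p * \<bar>exp (e - e') - 1\<bar> powr p))"
  proof (intro exI[of _ C] conjI Cpos ballI allI impI)
    fix t a e q a' e' q'
    assume t: "t \<in> {0..T}" and x: "(a, e, q) \<in> domO Q0" and "(a', e', q') \<in> domO Q0"
    have a: "0 < a" using x by (simp add: domO_def)
    obtain L1p where L1p: "L1p \<in> borel_measurable M" "(\<integral>\<^sup>+\<omega>. L1p \<omega> \<partial>M) \<le> ennreal K"
        "\<forall>\<omega>\<in>space M. \<forall>s\<in>{t..T}. ennreal (exp (mu * (1 * (W1 s \<omega> - W1 t \<omega>)))) \<le> L1p \<omega>"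
      using sup_bound[OF BM1 _ mu T t, of 1] unfolding K_def by auto
    obtain L1m where L1m: "L1m \<in> borel_measurable M" "(\<integral>\<^sup>+\<omega>. L1m \<omega> \<partial>M) \<le> ennreal K"
        "\<forall>\<omega>\<in>space M. \<forall>s\<in>{t..T}. ennreal (exp (mu * (-1 * (W1 s \<omega> - W1 t \<omega>)))) \<le> L1m \<omega>"
      using sup_bound[OF BM1 _ mu T t, of "-1"] unfolding K_def by auto
    obtain L2p where L2p: "L2p \<in> borel_measurable M" "(\<integral>\<^sup>+\<omega>. L2p \<omega> \<partial>M) \<le> ennreal K"
        "\<forall>\<omega>\<in>space M. \<forall>s\<in>{t..T}. ennreal (exp (mu * (1 * (W2 s \<omega> - W2 t \<omega>)))) \<le> L2p \<omega>"
      using sup_bound[OF BM2 _ mu T t, of 1] unfolding K_def by auto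
    obtain L2m where L2m: "L2m \<in> borel_measurable M" "(\<integral>\<^sup>+\<omega>. L2m \<omega> \<partial>M) \<le> ennreal K"
        "\<forall>\<omega>\<in>space M. \<forall>s\<in>{t..T}. ennreal (exp (mu * (-1 * (W2 s \<omega> - W2 t \<omega>)))) \<le> L2m \<omega>"
      using sup_bound[OF BM2 _ mu T t, of "-1"] unfolding K_def by auto
    define R where "R = \<bar>a - a'\<bar> powr p + a powr p * \<bar>exp (e - e') - 1\<bar> powr p"
    have R0: "0 \<le> R" by (simp add: R_def)
    define Q where "Q = 2 powr p * exp (p * c0) * exp (p * \<bar>e'\<bar>) * R"
    have Q0: "0 \<le> Q" using R0 by (simp add: Q_def)
    have pw: "(\<Squnion>r\<in>{t..T}. ennreal (\<bar>S_proc mu1 sig1 k sig2 rho W1 W2 t a e r \<omega>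
                   - S_proc mu1 sig1 k sig2 rho W1 W2 t a' e' r \<omega>\<bar> powr p))
        \<le> ennreal Q * (L1p \<omega> + L1m \<omega> + (L2p \<omega> + L2m \<omega>))" if \<omega>: "\<omega> \<in> space M" for \<omega>
    proof (rule SUP_least)
      fix r assume r: "r \<in> {t..T}"
      have cW1: "continuous_on {0..T} (\<lambda>s. W1 s \<omega>)" using BM1 \<omega> unfolding std_BM_def by auto
      have cW2: "continuous_on {0..T} (\<lambda>s. W2 s \<omega>)" using BM2 \<omega> unfolding std_BM_def by auto
      have ne: "{t..T} \<noteq> {}" using t by auto
      obtain s1 where s1: "s1 \<in> {t..T}" "\<forall>s\<in>{t..T}. \<bar>W1 s \<omega> - W1 t \<omega>\<bar> \<le> \<bar>W1 s1 \<omega> - W1 t \<omega>\<bar>"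
      proof -
        have "continuous_on {t..T} (\<lambda>s. \<bar>W1 s \<omega> - W1 t \<omega>\<bar>)"
          using continuous_on_subset[OF cW1, of "{t..T}"] t
          by (intro continuous_on_rabs continuous_on_diff continuous_on_const) auto
        from continuous_attains_sup[OF compact_Icc ne this] show ?thesis using that by blast
      qed
      obtain s2 where s2: "s2 \<in> {t..T}" "\<forall>s\<in>{t..T}. \<bar>W2 s \<omega> - W2 t \<omega>\<bar> \<le> \<bar>W2 s2 \<omega> - W2 t \<omega>\<bar>"
      proof -
        have "continuous_on {t..T} (\<lambda>s. \<bar>W2 s \<omega> - W2 t \<omega>\<bar>)"
          using continuous_on_subset[OF cW2, of "{t..T}"] t
          by (intro continuous_on_rabs continuous_on_diff continuous_on_const) auto
        from continuous_attains_sup[OF compact_Icc ne this] show ?thesis using that by blast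
      qed
      define X1 where "X1 = \<bar>W1 s1 \<omega> - W1 t \<omega>\<bar>"
      define X2 where "X2 = \<bar>W2 s2 \<omega> - W2 t \<omega>\<bar>"
      define D where "D = \<bar>a - a'\<bar> + a * \<bar>exp (e - e') - 1\<bar>"
      have D0: "0 \<le> D" using a by (simp add: D_def)
      have path: "\<bar>S_proc mu1 sig1 k sig2 rho W1 W2 t a e r \<omega> - S_proc mu1 sig1 k sig2 rho W1 W2 t a' e' r \<omega>\<bar>
          \<le> exp (c0 + c1 * (X1 + X2)) * exp \<bar>e'\<bar> * D"
        unfolding c0_def c1_def D_def
        by (rule pathwise_S[where Wa=W1 and Wb=W2 and \<omega>=\<omega> and T=T and t=t and r=r and Xa=X1 and Xb=X2])
           (use t r s1 s2 cW1 cW2 a k assms(4) assms(6) rho in \<open>auto simp: X1_def X2_def\<close>)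
      have "\<bar>S_proc mu1 sig1 k sig2 rho W1 W2 t a e r \<omega> - S_proc mu1 sig1 k sig2 rho W1 W2 t a' e' r \<omega>\<bar> powr p
          \<le> (exp (c0 + c1 * (X1 + X2)) * exp \<bar>e'\<bar> * D) powr p"
        using path p by (intro powr_mono2) auto
      also have "\<dots> = exp (c0 + c1 * (X1 + X2)) powr p * exp \<bar>e'\<bar> powr p * D powr p"
        using D0 by (simp add: powr_mult)
      also have "\<dots> = exp (p * c0) * exp (p * c1 * (X1 + X2)) * exp (p * \<bar>e'\<bar>) * D powr p"
        by (simp add: exp_powr_real exp_add[symmetric] algebra_simps)
      also have "\<dots> \<le> exp (p * c0) * (exp (mu * X1) + exp (mu * X2)) * exp (p * \<bar>e'\<bar>) * (2 powr p * R)"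
      proof (intro mult_mono mult_left_mono)
        show "exp (p * c1 * (X1 + X2)) \<le> exp (mu * X1) + exp (mu * X2)"
          using exp_sum_le[of "p * c1" X1 X2] by (simp add: mu_def mult.assoc)
        have "D powr p \<le> 2 powr p * (\<bar>a - a'\<bar> powr p + (a * \<bar>exp (e - e') - 1\<bar>) powr p)"
          unfolding D_def using a p by (intro powr_sum_le) auto
        also have "\<dots> = 2 powr p * R" using a by (simp add: R_def powr_mult)
        finally show "D powr p \<le> 2 powr p * R" .
      qed (use R0 in auto)
      also have "\<dots> = Q * (exp (mu * X1) + exp (mu * X2))" by (simp add: Q_def algebra_simps)
      finally have rb: "\<bar>S_proc mu1 sig1 k sig2 rho W1 W2 t a e r \<omega> - S_proc mu1 sig1 k sig2 rho W1 W2 t a' e' r \<omega>\<bar> powr p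
          \<le> Q * (exp (mu * X1) + exp (mu * X2))" .
      have b1: "ennreal (exp (mu * X1)) \<le> L1p \<omega> + L1m \<omega>"
      proof -
        have "exp (mu * X1) \<le> exp (mu * (1 * (W1 s1 \<omega> - W1 t \<omega>))) + exp (mu * (-1 * (W1 s1 \<omega> - W1 t \<omega>)))"
          unfolding X1_def by (cases "0 \<le> W1 s1 \<omega> - W1 t \<omega>") (auto simp: add_increasing2 add_increasing)
        then have "ennreal (exp (mu * X1)) \<le> ennreal (exp (mu * (1 * (W1 s1 \<omega> - W1 t \<omega>)))) + ennreal (exp (mu * (-1 * (W1 s1 \<omega> - W1 t \<omega>))))"
          by (simp add: ennreal_plus[symmetric] del: ennreal_plus)
        also have "\<dots> \<le> L1p \<omega> + L1m \<omega>" using L1p(3) L1m(3) \<omega> s1(1) by (intro add_mono) auto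
        finally show ?thesis .
      qed
      have b2: "ennreal (exp (mu * X2)) \<le> L2p \<omega> + L2m \<omega>"
      proof -
        have "exp (mu * X2) \<le> exp (mu * (1 * (W2 s2 \<omega> - W2 t \<omega>))) + exp (mu * (-1 * (W2 s2 \<omega> - W2 t \<omega>)))"
          unfolding X2_def by (cases "0 \<le> W2 s2 \<omega> - W2 t \<omega>") (auto simp: add_increasing2 add_increasing)
        then have "ennreal (exp (mu * X2)) \<le> ennreal (exp (mu * (1 * (W2 s2 \<omega> - W2 t \<omega>)))) + ennreal (exp (mu * (-1 * (W2 s2 \<omega> - W2 t \<omega>))))"
          by (simp add: ennreal_plus[symmetric] del: ennreal_plus)
        also have "\<dots> \<le> L2p \<omega> + L2m \<omega>" using L2p(3) L2m(3) \<omega> s2(1) by (intro add_mono) auto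
        finally show ?thesis .
      qed
      have "ennreal (\<bar>S_proc mu1 sig1 k sig2 rho W1 W2 t a e r \<omega> - S_proc mu1 sig1 k sig2 rho W1 W2 t a' e' r \<omega>\<bar> powr p)
          \<le> ennreal (Q * (exp (mu * X1) + exp (mu * X2)))" by (rule ennreal_leI[OF rb])
      also have "\<dots> = ennreal Q * (ennreal (exp (mu * X1)) + ennreal (exp (mu * X2)))"
        using Q0 by (simp add: ennreal_mult ennreal_plus)
      also have "\<dots> \<le> ennreal Q * (L1p \<omega> + L1m \<omega> + (L2p \<omega> + L2m \<omega>))"
        using b1 b2 by (intro mult_left_mono add_mono) auto
      finally show "ennreal (\<bar>S_proc mu1 sig1 k sig2 rho W1 W2 t a e r \<omega> - S_proc mu1 sig1 k sig2 rho W1 W2 t a' e' r \<omega>\<bar> powr p)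
          \<le> ennreal Q * (L1p \<omega> + L1m \<omega> + (L2p \<omega> + L2m \<omega>))" .
    qed
    have "(\<integral>\<^sup>+ \<omega>. (\<Squnion>r\<in>{t..T}. ennreal (\<bar>S_proc mu1 sig1 k sig2 rho W1 W2 t a e r \<omega>
                   - S_proc mu1 sig1 k sig2 rho W1 W2 t a' e' r \<omega>\<bar> powr p)) \<partial>M)
        \<le> (\<integral>\<^sup>+ \<omega>. ennreal Q * (L1p \<omega> + L1m \<omega> + (L2p \<omega> + L2m \<omega>)) \<partial>M)"
      by (rule nn_integral_mono) (rule pw)
    also have "\<dots> = ennreal Q * ((\<integral>\<^sup>+\<omega>. L1p \<omega> \<partial>M) + (\<integral>\<^sup>+\<omega>. L1m \<omega> \<partial>M) + ((\<integral>\<^sup>+\<omega>. L2p \<omega> \<partial>M) + (\<integral>\<^sup>+\<omega>. L2m \<omega> \<partial>M)))"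
      using L1p(1) L1m(1) L2p(1) L2m(1)
      by (simp add: nn_integral_cmult nn_integral_add)
    also have "\<dots> \<le> ennreal Q * (ennreal K + ennreal K + (ennreal K + ennreal K))"
      using L1p(2) L1m(2) L2p(2) L2m(2) by (intro mult_left_mono add_mono) auto
    also have "\<dots> = ennreal (Q * (4 * K))"
      using K Q0 by (simp add: ennreal_mult[symmetric] ennreal_plus[symmetric] del: ennreal_plus)
    also have "Q * (4 * K) = C * exp (p * \<bar>e'\<bar>) * R"
      by (simp add: Q_def C_def algebra_simps)
    finally show "(\<integral>\<^sup>+ \<omega>. (\<Squnion>r\<in>{t..T}. ennreal (\<bar>S_proc mu1 sig1 k sig2 rho W1 W2 t a e r \<omega>
                   - S_proc mu1 sig1 k sig2 rho W1 W2 t a' e' r \<omega>\<bar> powr p)) \<partial>M)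
       \<le> ennreal (C * exp (p * \<bar>e'\<bar>) *
            (\<bar>a - a'\<bar> powr p + a powr p * \<bar>exp (e - e') - 1\<bar> powr p))"
      unfolding R_def .
  qed
qed

end
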